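(* Let $n\ge2$, $N\ge2n+1$, $\alpha_2,\dots,\alpha_n$ real, $\alpha_1=1$. Consider the open ($k=-1$) $N$-dimensional metric $ds^2=-dt^2+a(t)^2\left(\frac{dr^2}{1+r^2}+r^2d\Omega_{N-2}^2\right)$ and the pressure ($p$) component of the Lovelock field equations with $p=0$, namely $$-(N-2)\left(\frac{N-3}{2}\Big(\frac{\dot a^2}{a^2}-\frac{1}{a^2}\Big)+\frac{\ddot a}{a}\right)+\sum_{i=2}^{n}\alpha_i\left[{}^{(i)}k_{11}\Big(\frac{\dot a^2}{a^2}-\frac{1}{a^2}\Big)^i+{}^{(i)}k_{12}\,\frac{\ddot a}{a}\Big(\frac{\dot a^2}{a^2}-\frac{1}{a^2}\Big)^{i-1}\right]=0 .$$ Let $C_1$ be a real root of $2-N+\sum_{i=2}^n\alpha_i\,{}^{(i)}k_{12}\,\frac{C_1^{i-1}}{i}=0$ (equivalently a nonzero root of $\sum_{i=1}^n\alpha_i\,{}^{(i)}k_{12}\,C_1^i/i=0$, with ${}^{(1)}k_{12}=-(N-2)$). Then $$a(t)=\frac{1}{\sqrt{C_1}}\sinh\big(\sqrt{C_1}\,t\big)=\sum_{j\ge0}\frac{C_1^{\,j}\,t^{2j+1}}{(2j+1)!}$$ is a solution of this pressure-free equation with $a(0)=0$.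
   Context: Dots denote $d/dt$ ($t$ cosmic time). This equation is the spatial ($p$) component of the Lovelock field equations $\sum_i\alpha_i\,{}^{(i)}\mathcal{H}^a_{\ b}=T^a_{\ b}$ for a perfect fluid in the FRW metric. Coefficients (binomial coefficients $\binom{a}{b}$, zero when $b<0$): ${}^{(i)}k_{11}=-\tfrac12(2(i-1))!\,(N-2)(N-1-2i)\binom{N-3}{2(i-1)}$, ${}^{(i)}k_{12}=-\tfrac12(2(i-1))!\left[2(N-i-1)\binom{N-2}{2(i-1)}+(N-2)(N-1-2i)\binom{N-3}{2i-3}\right]$. *)

theory Defs
  imports "HOL-Analysis.Analysis"
begin

definition binom_z :: "nat \<Rightarrow> int \<Rightarrow> real" where
  "binom_z a b = (if b < 0 then 0 else real (a choose nat b))"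

definition k11 :: "nat \<Rightarrow> nat \<Rightarrow> real" where
  "k11 N i = - (1/2) * fact (2 * (i - 1)) * (real N - 2) * (real N - 1 - 2 * real i)
              * binom_z (N - 3) (2 * (int i - 1))"

definition k12 :: "nat \<Rightarrow> nat \<Rightarrow> real" where
  "k12 N i = - (1/2) * fact (2 * (i - 1)) *
     (2 * (real N - real i - 1) * binom_z (N - 2) (2 * (int i - 1))
      + (real N - 2) * (real N - 1 - 2 * real i) * binom_z (N - 3) (2 * int i - 3))"

text \<open>Pressure component of the Lovelock equations (p = 0), open FRW, evaluated at
  a = a(t), a' = da/dt, a'' = d^2a/dt^2.\<close>
definition lovelock_p_lhs ::
  "nat \<Rightarrow> nat \<Rightarrow> (nat \<Rightarrow> real) \<Rightarrow> real \<Rightarrow> real \<Rightarrow> real \<Rightarrow> real" where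
  "lovelock_p_lhs N n \<alpha> a a' a'' =
     (let H = a'^2 / a^2 - 1 / a^2; Q = a'' / a in
      - (real N - 2) * ((real N - 3) / 2 * H + Q)
      + (\<Sum>i=2..n. \<alpha> i * (k11 N i * H ^ i + k12 N i * Q * H ^ (i - 1))))"

text \<open>Power series form of sinh(sqrt C t)/sqrt C (valid for every real C).\<close>
definition sinh_sol :: "real \<Rightarrow> real \<Rightarrow> real" where
  "sinh_sol C t = (\<Sum>j. C ^ j * t ^ (2 * j + 1) / fact (2 * j + 1))"

end

theory Submission imports Defs begin
lemma poly_ident:
  fixes j m A B F :: real
  assumes "B * (2*j+2) = (m - 2*j - 1) * A"
  shows "2 * (j+2) * (- (1/2) * F * ((m+3) - 2) * ((m+3) - 1 - 2 * (j+2)) * B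
      + - (1/2) * F * (2 * ((m+3) - (j+2) - 1) * (A+B) + ((m+3) - 2) * ((m+3) - 1 - 2 * (j+2)) * A))
    = ((m+3) - 1) * (- (1/2) * F * (2 * ((m+3) - (j+2) - 1) * (A+B) + ((m+3) - 2) * ((m+3) - 1 - 2 * (j+2)) * A))"
  using assms by algebra

lemma k_ident:
  assumes "2 \<le> i" "2*i+1 \<le> N"
  shows "2 * real i * (k11 N i + k12 N i) = (real N - 1) * k12 N i"
proof -
  define j where "j = i - 2"
  have i: "i = j + 2" using assms(1) j_def by simp
  define m where "m = N - 3"
  have N: "N = m + 3" and mj: "2*j+2 \<le> m" using assms(2) i m_def by auto
  define A where "A = real (m choose (2*j+1))"
  define B where "B = real (m choose (2*j+2))"
  have S: "real (Suc m choose (2*j+2)) = A + B" unfolding A_def B_def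
    using binomial_Suc_Suc[of m "2*j+1"] by simp
  have E: "(real m + 1) * A = (A + B) * (2*real j + 2)"
  proof -
    have "Suc m * (m choose (2*j+1)) = (Suc m choose Suc (2*j+1)) * Suc (2*j+1)"
      by (rule Suc_times_binomial_eq)
    then have "real (Suc m * (m choose (2*j+1))) = real ((Suc m choose (2*j+2)) * (2*j+2))"
      by simp
    then show ?thesis unfolding A_def B_def using S[unfolded A_def B_def] by (simp add: algebra_simps)
  qed
  have n1: "nat (2 * (int i - 1)) = 2*j+2" using i by simp
  have n2: "nat (2 * int i - 3) = 2*j+1" using i by simp
  have z1: "binom_z (N - 3) (2 * (int i - 1)) = B" unfolding binom_z_def B_def n1
    using i N by simp
  have z2: "binom_z (N - 2) (2 * (int i - 1)) = A + B" unfolding binom_z_def n1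
    using S i N by (simp add: numeral_3_eq_3)
  have z3: "binom_z (N - 3) (2 * int i - 3) = A" unfolding binom_z_def A_def n2
    using i N by simp
  have BE: "B * (2*real j+2) = (real m - 2*real j - 1) * A" using E by (simp add: algebra_simps)
  have "real N = real m + 3" "real i = real j + 2" using N i by auto
  then show ?thesis unfolding k11_def k12_def z1 z2 z3
    using poly_ident[OF BE, of "fact (2 * (i - 1))"] by simp
qed

definition cc :: "real \<Rightarrow> nat \<Rightarrow> real" where
  "cc C n = (if even n then 0 else C ^ ((n - 1) div 2) / fact n)"

lemma cc_summable: "summable (\<lambda>n. cc C n * y ^ n)"
proof (rule summable_comparison_test)
  show "summable (\<lambda>n. inverse (fact n) * ((1 + \<bar>C\<bar>) * \<bar>y\<bar>) ^ n)"
    by (rule summable_exp)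
  show "\<exists>M. \<forall>n\<ge>M. norm (cc C n * y ^ n) \<le> inverse (fact n) * ((1 + \<bar>C\<bar>) * \<bar>y\<bar>) ^ n"
  proof (intro exI allI impI)
    fix n :: nat
    have "\<bar>C\<bar> ^ ((n - 1) div 2) \<le> (1 + \<bar>C\<bar>) ^ ((n - 1) div 2)"
      by (rule power_mono) auto
    also have "\<dots> \<le> (1 + \<bar>C\<bar>) ^ n"
      by (rule power_increasing) auto
    finally have b: "\<bar>C\<bar> ^ ((n - 1) div 2) \<le> (1 + \<bar>C\<bar>) ^ n" .
    show "norm (cc C n * y ^ n) \<le> inverse (fact n) * ((1 + \<bar>C\<bar>) * \<bar>y\<bar>) ^ n"
    proof (cases "even n")
      case True then show ?thesis by (simp add: cc_def)
    next
      case False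
      have "norm (cc C n * y ^ n) = \<bar>C\<bar> ^ ((n - 1) div 2) * \<bar>y\<bar> ^ n / fact n"
        using False by (simp add: cc_def abs_mult power_abs)
      also have "\<dots> \<le> (1 + \<bar>C\<bar>) ^ n * \<bar>y\<bar> ^ n / fact n"
        by (intro divide_right_mono mult_right_mono b) auto
      finally show ?thesis by (simp add: power_mult_distrib divide_inverse mult.commute)
    qed
  qed
qed

lemma sinh_sol_eq: "sinh_sol C t = (\<Sum>n. cc C n * t ^ n)"
proof -
  have "(\<lambda>n. cc C n * t ^ n) sums (\<Sum>n. cc C n * t ^ n)"
    using cc_summable by (rule summable_sums)
  moreover have "strict_mono (\<lambda>j::nat. 2*j+1)" by (rule strict_monoI) auto
  moreover have "\<And>n. n \<notin> range (\<lambda>j::nat. 2*j+1) \<Longrightarrow> cc C n * t ^ n = 0"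
  proof -
    fix n :: nat assume "n \<notin> range (\<lambda>j::nat. 2*j+1)"
    then have "even n" by (metis oddE rangeI)
    then show "cc C n * t ^ n = 0" by (simp add: cc_def)
  qed
  ultimately have "(\<lambda>j. cc C (2*j+1) * t ^ (2*j+1)) sums (\<Sum>n. cc C n * t ^ n)"
    using sums_mono_reindex[of "\<lambda>j::nat. 2*j+1" "\<lambda>n. cc C n * t ^ n"] by blast
  moreover have "(\<lambda>j. cc C (2*j+1) * t ^ (2*j+1)) = (\<lambda>j. C ^ j * t ^ (2 * j + 1) / fact (2 * j + 1))"
    by (simp add: cc_def)
  ultimately show ?thesis unfolding sinh_sol_def by (simp add: sums_iff)
qed

lemma cc_diffs2: "diffs (diffs (cc C)) = (\<lambda>n. C * cc C n)"
proof
  fix n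
  show "diffs (diffs (cc C)) n = C * cc C n"
  proof (cases "even n")
    case True then show ?thesis by (simp add: diffs_def cc_def)
  next
    case False
    then obtain k where k: "n = 2*k+1" by (metis oddE)
    have f: "fact (Suc (Suc n)) = (real (Suc (Suc n)) * real (Suc n)) * (fact n :: real)"
      by simp
    have d: "diffs (diffs (cc C)) n = real (Suc n) * (real (Suc (Suc n)) * cc C (Suc (Suc n)))"
      by (simp add: diffs_def)
    have c2: "cc C (Suc (Suc n)) = C * C ^ k / fact (Suc (Suc n))" using k by (simp add: cc_def)
    have c0: "cc C n = C ^ k / fact n" using k by (simp add: cc_def)
    have "fact n > (0::real)" by simp
    then show ?thesis unfolding d c2 c0 f by (simp add: field_simps del: of_nat_Suc)
  qed
qed


theorem mainTheorem4:
  fixes N n :: nat and \<alpha> :: "nat \<Rightarrow> real" and C1 :: real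
  assumes "n \<ge> 2" and "N \<ge> 2 * n + 1" and "\<alpha> 1 = 1"
    and "2 - real N + (\<Sum>i=2..n. \<alpha> i * k12 N i * C1 ^ (i - 1) / real i) = 0"
  shows "sinh_sol C1 0 = 0 \<and>
    (\<exists>a' a''. (\<forall>t. (sinh_sol C1 has_real_derivative a' t) (at t)) \<and>
              (\<forall>t. (a' has_real_derivative a'' t) (at t)) \<and>
              (\<forall>t. sinh_sol C1 t \<noteq> 0 \<longrightarrow>
                   lovelock_p_lhs N n \<alpha> (sinh_sol C1 t) (a' t) (a'' t) = 0))"
proof -
  define a where "a = sinh_sol C1"
  define a1 where "a1 = (\<lambda>t. \<Sum>n. diffs (cc C1) n * t ^ n)"
  define a2 where "a2 = (\<lambda>t. \<Sum>n. diffs (diffs (cc C1)) n * t ^ n)"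
  have aeq: "a = (\<lambda>t. \<Sum>n. cc C1 n * t ^ n)" unfolding a_def using sinh_sol_eq by blast
  have s1: "\<And>y. summable (\<lambda>n. diffs (cc C1) n * y ^ n)"
    by (rule termdiff_converges_all) (rule cc_summable)
  have da: "\<And>t. (a has_real_derivative a1 t) (at t)" unfolding aeq a1_def
    by (rule termdiffs_strong_converges_everywhere) (rule cc_summable)
  have da1: "\<And>t. (a1 has_real_derivative a2 t) (at t)" unfolding a2_def a1_def
    by (rule termdiffs_strong_converges_everywhere) (rule s1)
  have a2eq: "\<And>t. a2 t = C1 * a t" unfolding a2_def cc_diffs2 aeq
    using suminf_mult[OF cc_summable] by (simp add: mult.assoc)
  have a0: "a 0 = 0" unfolding aeq by (simp add: cc_def)
  have a10: "a1 0 = 1" unfolding a1_def by (simp add: cc_def diffs_def)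
  have cons: "\<And>t. a1 t ^ 2 - C1 * a t ^ 2 = 1"
  proof -
    fix t
    have "\<And>x. ((\<lambda>t. a1 t ^ 2 - C1 * a t ^ 2) has_real_derivative 0) (at x)"
    proof -
      fix x
      have "((\<lambda>t. a1 t ^ 2 - C1 * a t ^ 2) has_real_derivative
          (2 * a1 x * a2 x - C1 * (2 * a x * a1 x))) (at x)"
        using da[of x] da1[of x]
        by (auto intro!: derivative_eq_intros)
      then show "((\<lambda>t. a1 t ^ 2 - C1 * a t ^ 2) has_real_derivative 0) (at x)"
        by (simp add: a2eq algebra_simps)
    qed
    then have "a1 t ^ 2 - C1 * a t ^ 2 = a1 0 ^ 2 - C1 * a 0 ^ 2"
      by (rule DERIV_isconst_all[rule_format])
    then show "a1 t ^ 2 - C1 * a t ^ 2 = 1" using a0 a10 by simp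
  qed
  have main: "lovelock_p_lhs N n \<alpha> (a t) (a1 t) (a2 t) = 0" if nz: "a t \<noteq> 0" for t
  proof -
    have H: "a1 t ^ 2 / a t ^ 2 - 1 / a t ^ 2 = C1"
      using cons[of t] nz by (simp add: field_simps)
    have Q: "a2 t / a t = C1" using nz a2eq by simp
    have trm: "\<alpha> i * (k11 N i * C1 ^ i + k12 N i * C1 * C1 ^ (i - 1))
        = (real N - 1) / 2 * C1 * (\<alpha> i * k12 N i * C1 ^ (i - 1) / real i)"
      if "i \<in> {2..n}" for i
    proof -
      have i2: "2 \<le> i" and iN: "2*i+1 \<le> N" using that assms(2) by auto
      have ki: "k11 N i + k12 N i = (real N - 1) * k12 N i / (2 * real i)"
        using k_ident[OF i2 iN] i2 by (simp add: field_simps)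
      have pw: "C1 * C1 ^ (i - 1) = C1 ^ i" using i2 by (metis power_eq_if not_numeral_le_zero le_zero_eq)
      have "\<alpha> i * (k11 N i * C1 ^ i + k12 N i * C1 * C1 ^ (i - 1))
           = \<alpha> i * (k11 N i + k12 N i) * C1 ^ i" using pw by (simp add: algebra_simps)
      also have "\<dots> = (real N - 1) / 2 * C1 * (\<alpha> i * k12 N i * C1 ^ (i - 1) / real i)"
        unfolding ki pw[symmetric] by (simp add: field_simps)
      finally show ?thesis .
    qed
    have "lovelock_p_lhs N n \<alpha> (a t) (a1 t) (a2 t)
        = - (real N - 2) * ((real N - 3) / 2 * C1 + C1)
          + (\<Sum>i=2..n. (real N - 1) / 2 * C1 * (\<alpha> i * k12 N i * C1 ^ (i - 1) / real i))"
      unfolding lovelock_p_lhs_def Let_def H Q using trm by (simp add: mult.assoc)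
    also have "\<dots> = - (real N - 2) * ((real N - 3) / 2 * C1 + C1)
          + (real N - 1) / 2 * C1 * (real N - 2)"
    proof -
      have "(\<Sum>i=2..n. (real N - 1) / 2 * C1 * (\<alpha> i * k12 N i * C1 ^ (i - 1) / real i))
          = (real N - 1) / 2 * C1 * (\<Sum>i=2..n. \<alpha> i * k12 N i * C1 ^ (i - 1) / real i)"
        by (rule sum_distrib_left[symmetric])
      also have "(\<Sum>i=2..n. \<alpha> i * k12 N i * C1 ^ (i - 1) / real i) = real N - 2"
        using assms(4) by linarith
      finally show ?thesis by simp
    qed
    also have "\<dots> = 0" by (simp add: field_simps)
    finally show ?thesis .
  qed
  show ?thesis
    using a0 da da1 main unfolding a_def by blast
qed

end
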